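(* Let $(M,g,S)$ be as in the context, $p\in M$, and let $u\in T_pM$ be such that $\{u,Su,S^2u,S^3u\}$ is an orthonormal basis of $T_pM$ with respect to $g$. Give each $v\in T_pM$ the coordinates $(x,y,z,t)$ defined by $v=xu+ySu+zS^2u+tS^3u$, and define new coordinates $(x',y',z',t')$ by $x=\frac12(x'-y'+z'-t')$, $y=\frac{\sqrt2}{2}(-y'+t')$, $z=-\frac12(x'+y'+z'+t')$, $t=\frac{\sqrt2}{2}(-x'+z')$. For $a\in\mathbb R$, the hyper-sphere $s=\{v\in T_pM:\tilde g(v,v)=a\}$ has, in the coordinates $(x',y',z',t')$, the equation $$x'^2+y'^2-z'^2-t'^2=\frac{a}{\sqrt2}.$$
   Context: $M$ is a 4-dimensional differentiable manifold with a positive definite metric $g$ and a tensor field $S$ of type $(1,1)$ whose components in some local coordinate system form the matrix with rows $(0,1,0,0)$, $(0,0,1,0)$, $(0,0,0,1)$, $(-1,0,0,0)$; hence $S^4=-\mathrm{id}$. It is assumed that $g(Su,Sv)=g(u,v)$ for all vector fields $u,v$. The associated metric is $\tilde g(u,v)=g(u,Sv)+g(Su,v)$. *)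

theory Defs
  imports "HOL-Analysis.Analysis"
begin

definition assoc_metric :: "('v \<Rightarrow> 'v \<Rightarrow> real) \<Rightarrow> ('v \<Rightarrow> 'v) \<Rightarrow> 'v \<Rightarrow> 'v \<Rightarrow> real" where
  "assoc_metric g S v w = g v (S w) + g (S v) w"

definition hypersphere :: "('v \<Rightarrow> 'v \<Rightarrow> real) \<Rightarrow> ('v \<Rightarrow> 'v) \<Rightarrow> real \<Rightarrow> 'v set" where
  "hypersphere g S a = {v. assoc_metric g S v v = a}"

end

theory Submission
  imports Defs
begin

theorem theorem3p1:
  fixes g :: "'v::real_vector \<Rightarrow> 'v \<Rightarrow> real" and S :: "'v \<Rightarrow> 'v"
    and u :: 'v and a :: real
  assumes g_bilinear: "bilinear g"
    and g_sym: "\<forall>v w. g v w = g w v"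
    and g_posdef: "\<forall>v. v \<noteq> 0 \<longrightarrow> g v v > 0"
    and S_linear: "linear S"
    and S4: "\<forall>v. (S ^^ 4) v = - v"
    and S_isom: "\<forall>v w. g (S v) (S w) = g v w"
    and u_orthonormal: "\<forall>i<4. \<forall>j<4. g ((S ^^ i) u) ((S ^^ j) u) = (if i = j then 1 else 0)"
    and u_spans: "span {(S ^^ i) u | i. i < (4::nat)} = UNIV"
  shows "\<forall>x' y' z' t' :: real.
     let x = (x' - y' + z' - t') / 2;
         y = sqrt 2 / 2 * (- y' + t');
         z = - (x' + y' + z' + t') / 2;
         t = sqrt 2 / 2 * (- x' + z');
         v = x *\<^sub>R u + y *\<^sub>R S u + z *\<^sub>R (S ^^ 2) u + t *\<^sub>R (S ^^ 3) u
     in (v \<in> hypersphere g S a \<longleftrightarrow> x'^2 + y'^2 - z'^2 - t'^2 = a / sqrt 2)"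
proof (intro allI)
  fix x' y' z' t' :: real
  define e0 where "e0 = u"
  define e1 where "e1 = S u"
  define e2 where "e2 = (S ^^ 2) u"
  define e3 where "e3 = (S ^^ 3) u"
  have S0: "S e0 = e1" by (simp add: e0_def e1_def)
  have S1: "S e1 = e2" by (simp add: e1_def e2_def numeral_2_eq_2)
  have S2: "S e2 = e3" by (simp add: e2_def e3_def numeral_3_eq_3 numeral_2_eq_2)
  have S3: "S e3 = - e0"
  proof -
    have "S e3 = (S ^^ 4) u" by (simp add: e3_def numeral_3_eq_3 eval_nat_numeral)
    thus ?thesis using S4 by (simp add: e0_def)
  qed
  have oij: "i<4 \<Longrightarrow> j<4 \<Longrightarrow> g ((S ^^ i) u) ((S ^^ j) u) = (if i = j then 1 else 0)" for i j
    using u_orthonormal by blast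
  have o: "g e0 e0 = 1" "g e1 e1 = 1" "g e2 e2 = 1" "g e3 e3 = 1"
    "g e0 e1 = 0" "g e0 e2 = 0" "g e0 e3 = 0" "g e1 e2 = 0" "g e1 e3 = 0" "g e2 e3 = 0"
    "g e1 e0 = 0" "g e2 e0 = 0" "g e3 e0 = 0" "g e2 e1 = 0" "g e3 e1 = 0" "g e3 e2 = 0"
    using oij[of 0 0] oij[of 1 1] oij[of 2 2] oij[of 3 3] oij[of 0 1] oij[of 0 2] oij[of 0 3]
      oij[of 1 2] oij[of 1 3] oij[of 2 3] oij[of 1 0] oij[of 2 0] oij[of 3 0] oij[of 2 1]
      oij[of 3 1] oij[of 3 2]
    unfolding e0_def e1_def e2_def e3_def by simp_all
  have la: "g (p + q) w = g p w + g q w" for p q w using bilinear_ladd[OF g_bilinear] .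
  have ra: "g w (p + q) = g w p + g w q" for p q w using bilinear_radd[OF g_bilinear] .
  have lm: "g (c *\<^sub>R p) w = c * g p w" for c p w using bilinear_lmul[OF g_bilinear] by simp
  have rm: "g w (c *\<^sub>R p) = c * g w p" for c p w using bilinear_rmul[OF g_bilinear] by simp
  have ln: "g (- p) w = - g p w" for p w using bilinear_lneg[OF g_bilinear] .
  have rn: "g w (- p) = - g w p" for p w using bilinear_rneg[OF g_bilinear] .
  have ls: "g (p - q) w = g p w - g q w" for p q w using bilinear_lsub[OF g_bilinear] .
  have rs: "g w (p - q) = g w p - g w q" for p q w using bilinear_rsub[OF g_bilinear] .
  have Sv: "S (x *\<^sub>R e0 + y *\<^sub>R e1 + z *\<^sub>R e2 + t *\<^sub>R e3)
      = x *\<^sub>R e1 + y *\<^sub>R e2 + z *\<^sub>R e3 + (- t) *\<^sub>R e0" for x y z t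
    using S_linear S0 S1 S2 S3 by (simp add: linear_add linear_scale)
  have key: "assoc_metric g S (x *\<^sub>R e0 + y *\<^sub>R e1 + z *\<^sub>R e2 + t *\<^sub>R e3)
        (x *\<^sub>R e0 + y *\<^sub>R e1 + z *\<^sub>R e2 + t *\<^sub>R e3) = 2 * (x*y + y*z + z*t - x*t)" for x y z t
    unfolding assoc_metric_def Sv by (simp add: la ra lm rm ln rn ls rs o algebra_simps)
  have s2: "sqrt 2 * sqrt 2 = (2::real)" by simp
  have alg: "2 * (x*y + y*z + z*t - x*t) = sqrt 2 * (x'^2 + y'^2 - z'^2 - t'^2)"
    if "x = (x' - y' + z' - t') / 2" "y = sqrt 2 / 2 * (- y' + t')"
       "z = - (x' + y' + z' + t') / 2" "t = sqrt 2 / 2 * (- x' + z')" for x y z t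
    unfolding that power2_eq_square by (simp add: field_simps; algebra)
  show "let x = (x' - y' + z' - t') / 2;
         y = sqrt 2 / 2 * (- y' + t');
         z = - (x' + y' + z' + t') / 2;
         t = sqrt 2 / 2 * (- x' + z');
         v = x *\<^sub>R u + y *\<^sub>R S u + z *\<^sub>R (S ^^ 2) u + t *\<^sub>R (S ^^ 3) u
     in (v \<in> hypersphere g S a \<longleftrightarrow> x'^2 + y'^2 - z'^2 - t'^2 = a / sqrt 2)"
  proof -
    define x where "x = (x' - y' + z' - t') / 2"
    define y where "y = sqrt 2 / 2 * (- y' + t')"
    define z where "z = - (x' + y' + z' + t') / 2"
    define t where "t = sqrt 2 / 2 * (- x' + z')"
    have A: "assoc_metric g S (x *\<^sub>R u + y *\<^sub>R S u + z *\<^sub>R (S ^^ 2) u + t *\<^sub>R (S ^^ 3) u)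
        (x *\<^sub>R u + y *\<^sub>R S u + z *\<^sub>R (S ^^ 2) u + t *\<^sub>R (S ^^ 3) u)
       = sqrt 2 * (x'^2 + y'^2 - z'^2 - t'^2)"
      using key[of x y z t] alg[OF x_def y_def z_def t_def] by (simp add: e0_def e1_def e2_def e3_def)
    have B: "(sqrt 2 * Q = a) = (Q = a / sqrt 2)" for Q by (auto simp: field_simps)
    show ?thesis
      unfolding Let_def hypersphere_def mem_Collect_eq
      unfolding x_def[symmetric] y_def[symmetric] z_def[symmetric] t_def[symmetric]
      using A B by simp
  qed
qed

end
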